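(* (1) The family $\mathcal{FF}=(\mathcal{FF}(n))_{n\ge1}$ of formal fractions, with the compositions $\circ_i$ defined below, is a (non-symmetric) set-operad, with unit $\frac{1}{[1]}\in\mathcal{FF}(1)$. (2) The map $\phi^0$ which sends each symbol $[S]$ to $\sum_{j\in S}u_j$ (and hence a formal fraction to the corresponding rational fraction) is an injective morphism of set-operads from $\mathcal{FF}$ to the set-operad underlying $\mathrm{Mould}_0$. (3) The map $\phi^1$ which sends each symbol $[S]$ to $\bigl(\prod_{j\in S}u_j\bigr)-1$ (and hence a formal fraction to the corresponding rational fraction) is an injective morphism of set-operads from $\mathcal{FF}$ to the set-operad underlying $\mathrm{Mould}_1$.
   Context: Formal fractions: for $n\ge1$, $\mathcal{FF}(n)$ is the set of formal fractions whose numerator and denominator are (commutative) products of formal symbols $[S]$, where $S$ ranges over non-empty subsets of $\{1,\dots,n\}$. Fractions are reduced, i.e. a symbol occurring in both numerator and denominator is cancelled; equivalently $\mathcal{FF}(n)$ is the free abelian group, written multiplicatively, on the symbols $[S]$. The empty product is written $1$. For $F\in\mathcal{FF}(m)$ and sets $A_1,\dots,A_m$ of positive integers, $F(A_1,\dots,A_m)$ denotes the fraction obtained by replacing each symbol $[S]$ by $[\bigcup_{k\in S}A_k]$ (a single integer $a$ stands for $\{a\}$). For $F\in\mathcal{FF}(m)$, $G\in\mathcal{FF}(n)$ and $1\le i\le m$, put $S_{i,n}=\{i,i+1,\dots,i+n-1\}$ and $$F\circ_i G=[S_{i,n}]\;F(1,\dots,i-1,S_{i,n},i+n,\dots,m+n-1)\;G(i,i+1,\dots,i+n-1)\in\mathcal{FF}(m+n-1).$$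 $\mathrm{Mould}_0$ is the operad with $\mathrm{Mould}_0(n)=\mathbb{Q}(u_1,\dots,u_n)$ and composition, for $F\in\mathrm{Mould}_0(m)$, $G\in\mathrm{Mould}_0(n)$, $F\circ_i G=\Sigma_{i,n}\,F(u_1,\dots,u_{i-1},\Sigma_{i,n},u_{i+n},\dots,u_{m+n-1})\,G(u_i,\dots,u_{i+n-1})$ with $\Sigma_{i,n}=u_i+\dots+u_{i+n-1}$. $\mathrm{Mould}_1$ is the operad on the same spaces with composition $F\circ_i G=(\Pi_{i,n}-1)\,F(u_1,\dots,u_{i-1},\Pi_{i,n},u_{i+n},\dots,u_{m+n-1})\,G(u_i,\dots,u_{i+n-1})$ with $\Pi_{i,n}=u_iu_{i+1}\cdots u_{i+n-1}$. The underlying set-operad of an operad of vector spaces is obtained by forgetting the linear structure. *)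

theory Defs
  imports Complex_Main "HOL-Library.Poly_Mapping" "HOL-Computational_Algebra.Fraction_Field"
begin

text \<open>A formal fraction is an element of the free abelian group (written additively
  here, multiplicatively in the paper) on symbols [S], S a set of positive integers.
  The symbol [S] is frag_of S; the empty product 1 is 0; product is +; inverse is uminus.\<close>

type_synonym formal_fraction = "nat set \<Rightarrow>\<^sub>0 int"

definition FF :: "nat \<Rightarrow> formal_fraction set" where
  "FF n = {F. Poly_Mapping.keys F \<subseteq> {S. S \<noteq> {} \<and> S \<subseteq> {1..n}}}"

definition ff_subst :: "(nat \<Rightarrow> nat set) \<Rightarrow> formal_fraction \<Rightarrow> formal_fraction" where
  "ff_subst A F = frag_extend (\<lambda>S. frag_of (\<Union>k\<in>S. A k)) F"

definition Sblock :: "nat \<Rightarrow> nat \<Rightarrow> nat set" where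
  "Sblock i n = {i..<i+n}"

definition ff_comp :: "formal_fraction \<Rightarrow> nat \<Rightarrow> nat \<Rightarrow> formal_fraction \<Rightarrow> formal_fraction" where
  "ff_comp F i n G =
     frag_of (Sblock i n)
     + ff_subst (\<lambda>k. if k < i then {k} else if k = i then Sblock i n else {k + n - 1}) F
     + ff_subst (\<lambda>k. {k + i - 1}) G"

definition ff_unit :: formal_fraction where
  "ff_unit = - frag_of {1}"

text \<open>Multivariate polynomials over Q in variables u_1,u_2,... (monomials are finitely
  supported exponent maps) and their fraction field.\<close>
type_synonym mpoly = "(nat \<Rightarrow>\<^sub>0 nat) \<Rightarrow>\<^sub>0 rat"
type_synonym ratfun = "mpoly fract"

definition pvar :: "nat \<Rightarrow> mpoly" where
  "pvar j = Poly_Mapping.single (Poly_Mapping.single j 1) 1"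

definition pvars :: "mpoly \<Rightarrow> nat set" where
  "pvars p = (\<Union>m\<in>Poly_Mapping.keys p. Poly_Mapping.keys m)"

definition u :: "nat \<Rightarrow> ratfun" where
  "u j = Fract (pvar j) 1"

text \<open>Mould(n) = Q(u_1,...,u_n), as a subfield of Q(u_1,u_2,...).\<close>
definition Mould :: "nat \<Rightarrow> ratfun set" where
  "Mould n = {Fract p q | p q. q \<noteq> 0 \<and> pvars p \<subseteq> {1..n} \<and> pvars q \<subseteq> {1..n}}"

definition psubst :: "(nat \<Rightarrow> mpoly) \<Rightarrow> mpoly \<Rightarrow> mpoly" where
  "psubst \<sigma> p = (\<Sum>m\<in>Poly_Mapping.keys p.
      Poly_Mapping.single 0 (Poly_Mapping.lookup p m) *
      (\<Prod>j\<in>Poly_Mapping.keys m. \<sigma> j ^ Poly_Mapping.lookup m j))"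

text \<open>Substitution into a rational fraction p/q (well defined for the injective
  substitutions used below).\<close>
definition rsubst :: "(nat \<Rightarrow> mpoly) \<Rightarrow> ratfun \<Rightarrow> ratfun" where
  "rsubst \<sigma> x = (SOME y. \<exists>p q. q \<noteq> 0 \<and> x = Fract p q \<and> y = Fract (psubst \<sigma> p) (psubst \<sigma> q))"

definition Sigma_poly :: "nat \<Rightarrow> nat \<Rightarrow> mpoly" where
  "Sigma_poly i n = (\<Sum>j\<in>Sblock i n. pvar j)"

definition Pi_poly :: "nat \<Rightarrow> nat \<Rightarrow> mpoly" where
  "Pi_poly i n = (\<Prod>j\<in>Sblock i n. pvar j)"

definition outer_subst :: "nat \<Rightarrow> nat \<Rightarrow> mpoly \<Rightarrow> nat \<Rightarrow> mpoly" where
  "outer_subst i n X = (\<lambda>k. if k < i then pvar k else if k = i then X else pvar (k + n - 1))"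

definition inner_subst :: "nat \<Rightarrow> nat \<Rightarrow> mpoly" where
  "inner_subst i = (\<lambda>k. pvar (k + i - 1))"

definition mould0_comp :: "ratfun \<Rightarrow> nat \<Rightarrow> nat \<Rightarrow> ratfun \<Rightarrow> ratfun" where
  "mould0_comp F i n G =
     Fract (Sigma_poly i n) 1 * rsubst (outer_subst i n (Sigma_poly i n)) F
       * rsubst (inner_subst i) G"

definition mould1_comp :: "ratfun \<Rightarrow> nat \<Rightarrow> nat \<Rightarrow> ratfun \<Rightarrow> ratfun" where
  "mould1_comp F i n G =
     (Fract (Pi_poly i n) 1 - 1) * rsubst (outer_subst i n (Pi_poly i n)) F
       * rsubst (inner_subst i) G"

definition phi0 :: "formal_fraction \<Rightarrow> ratfun" where
  "phi0 F = (\<Prod>S\<in>Poly_Mapping.keys F. (\<Sum>j\<in>S. u j) powi Poly_Mapping.lookup F S)"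

definition phi1 :: "formal_fraction \<Rightarrow> ratfun" where
  "phi1 F = (\<Prod>S\<in>Poly_Mapping.keys F. ((\<Prod>j\<in>S. u j) - 1) powi Poly_Mapping.lookup F S)"

text \<open>P n is the set of operations of arity n, cmp x i n y = x o_i y for y of arity n.\<close>
definition is_ns_set_operad ::
  "(nat \<Rightarrow> 'a set) \<Rightarrow> ('a \<Rightarrow> nat \<Rightarrow> nat \<Rightarrow> 'a \<Rightarrow> 'a) \<Rightarrow> 'a \<Rightarrow> bool" where
  "is_ns_set_operad P cmp e \<longleftrightarrow>
     e \<in> P 1 \<and>
     (\<forall>m n x y i. 1 \<le> m \<longrightarrow> 1 \<le> n \<longrightarrow> x \<in> P m \<longrightarrow> y \<in> P n \<longrightarrow> 1 \<le> i \<longrightarrow> i \<le> m \<longrightarrow>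
        cmp x i n y \<in> P (m + n - 1)) \<and>
     (\<forall>n x. 1 \<le> n \<longrightarrow> x \<in> P n \<longrightarrow> cmp e 1 n x = x) \<and>
     (\<forall>m x i. 1 \<le> m \<longrightarrow> x \<in> P m \<longrightarrow> 1 \<le> i \<longrightarrow> i \<le> m \<longrightarrow> cmp x i 1 e = x) \<and>
     (\<forall>m n p x y z i j. 1 \<le> m \<longrightarrow> 1 \<le> n \<longrightarrow> 1 \<le> p \<longrightarrow>
        x \<in> P m \<longrightarrow> y \<in> P n \<longrightarrow> z \<in> P p \<longrightarrow>
        1 \<le> i \<longrightarrow> i \<le> m \<longrightarrow> 1 \<le> j \<longrightarrow> j \<le> n \<longrightarrow>
        cmp (cmp x i n y) (i + j - 1) p z = cmp x i (n + p - 1) (cmp y j p z)) \<and>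
     (\<forall>m n p x y z i j. 1 \<le> m \<longrightarrow> 1 \<le> n \<longrightarrow> 1 \<le> p \<longrightarrow>
        x \<in> P m \<longrightarrow> y \<in> P n \<longrightarrow> z \<in> P p \<longrightarrow>
        1 \<le> i \<longrightarrow> i < j \<longrightarrow> j \<le> m \<longrightarrow>
        cmp (cmp x i n y) (j + n - 1) p z = cmp (cmp x j p z) i n y)"

definition is_operad_morphism ::
  "(nat \<Rightarrow> 'a set) \<Rightarrow> ('a \<Rightarrow> nat \<Rightarrow> nat \<Rightarrow> 'a \<Rightarrow> 'a) \<Rightarrow> 'a \<Rightarrow>
   (nat \<Rightarrow> 'b set) \<Rightarrow> ('b \<Rightarrow> nat \<Rightarrow> nat \<Rightarrow> 'b \<Rightarrow> 'b) \<Rightarrow> 'b \<Rightarrow> ('a \<Rightarrow> 'b) \<Rightarrow> bool" where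
  "is_operad_morphism P compP eP Q compQ eQ f \<longleftrightarrow>
     (\<forall>n x. 1 \<le> n \<longrightarrow> x \<in> P n \<longrightarrow> f x \<in> Q n) \<and>
     f eP = eQ \<and>
     (\<forall>m n x y i. 1 \<le> m \<longrightarrow> 1 \<le> n \<longrightarrow> x \<in> P m \<longrightarrow> y \<in> P n \<longrightarrow> 1 \<le> i \<longrightarrow> i \<le> m \<longrightarrow>
        f (compP x i n y) = compQ (f x) i n (f y))"

end

theory Submission
  imports Defs "HOL-Computational_Algebra.Polynomial"
begin


lemma ff_subst_add: "ff_subst A (F + G) = ff_subst A F + ff_subst A G"
  by (simp add: ff_subst_def frag_extend_add)
lemma ff_subst_minus: "ff_subst A (- F) = - ff_subst A F"
  by (simp add: ff_subst_def frag_extend_minus)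
lemma ff_subst_diff: "ff_subst A (F - G) = ff_subst A F - ff_subst A G"
  by (simp add: ff_subst_def frag_extend_diff)
lemma ff_subst_of: "ff_subst A (frag_of S) = frag_of (\<Union>k\<in>S. A k)"
  by (simp add: ff_subst_def)
lemma ff_subst_0: "ff_subst A 0 = 0"
  by (simp add: ff_subst_def)
lemma ff_subst_compose: "ff_subst A (ff_subst B F) = ff_subst (\<lambda>k. \<Union>l\<in>B k. A l) F"
proof -
  have "ff_subst A (ff_subst B F) = frag_extend ((\<lambda>S. frag_of (\<Union>k\<in>S. A k)) o (\<lambda>S. \<Union>k\<in>S. B k)) F"
    unfolding ff_subst_def using frag_extend_compose[of "(\<lambda>S. frag_of (\<Union>k\<in>S. A k))" "(\<lambda>S. \<Union>k\<in>S. B k)" F]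
    by (simp add: o_def)
  also have "\<dots> = ff_subst (\<lambda>k. \<Union>l\<in>B k. A l) F"
    unfolding ff_subst_def o_def by (rule frag_extend_eq) auto
  finally show ?thesis .
qed
lemma ff_subst_cong: "(\<And>k. k \<in> \<Union>(Poly_Mapping.keys F) \<Longrightarrow> A k = B k) \<Longrightarrow> ff_subst A F = ff_subst B F"
  unfolding ff_subst_def by (rule frag_extend_eq) (metis (no_types, lifting) SUP_cong UnionI)
lemma ff_subst_id: "ff_subst (\<lambda>k. {k}) F = F"
  unfolding ff_subst_def by (simp add: frag_expansion[symmetric])
lemma ff_subst_cong_id: "(\<And>k. k \<in> \<Union>(Poly_Mapping.keys F) \<Longrightarrow> A k = {k}) \<Longrightarrow> ff_subst A F = F"
  using ff_subst_cong[of F A "\<lambda>k. {k}"] ff_subst_id by metis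
lemma keys_ff_subst: "Poly_Mapping.keys (ff_subst A F) \<subseteq> (\<lambda>S. \<Union>k\<in>S. A k) ` Poly_Mapping.keys F"
  unfolding ff_subst_def
  by (rule order_trans[OF keys_frag_extend]) auto

lemma FF_keys: "F \<in> FF n \<Longrightarrow> k \<in> \<Union>(Poly_Mapping.keys F) \<Longrightarrow> 1 \<le> k \<and> k \<le> n"
proof -
  assume "F \<in> FF n" "k \<in> \<Union>(Poly_Mapping.keys F)"
  then obtain X where "X \<in> Poly_Mapping.keys F" "k \<in> X" "Poly_Mapping.keys F \<subseteq> {S. S \<noteq> {} \<and> S \<subseteq> {1..n}}"
    unfolding FF_def by auto
  then have "X \<in> {S. S \<noteq> {} \<and> S \<subseteq> {1..n}}" by (rule_tac subsetD) auto
  then show ?thesis using \<open>k \<in> X\<close> by auto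
qed

definition Oi :: "nat \<Rightarrow> nat \<Rightarrow> nat \<Rightarrow> nat set" where
  "Oi i n = (\<lambda>k. if k < i then {k} else if k = i then Sblock i n else {k + n - 1})"
definition Ii :: "nat \<Rightarrow> nat \<Rightarrow> nat set" where
  "Ii i = (\<lambda>k. {k + i - 1})"

lemma ff_comp_alt: "ff_comp F i n G = frag_of (Sblock i n) + ff_subst (Oi i n) F + ff_subst (Ii i) G"
  unfolding ff_comp_def Oi_def Ii_def ..

lemma FF_add: "F \<in> FF n \<Longrightarrow> G \<in> FF n \<Longrightarrow> F + G \<in> FF n"
proof -
  assume F: "F \<in> FF n" and G: "G \<in> FF n"
  define X where "X = {S. S \<noteq> {} \<and> S \<subseteq> {1..n}}"
  have "Poly_Mapping.keys F \<subseteq> X" "Poly_Mapping.keys G \<subseteq> X" using F G by (simp_all add: FF_def X_def)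
  then have "Poly_Mapping.keys (F + G) \<subseteq> X" using keys_add[of F G] by (meson le_sup_iff order_trans)
  then show ?thesis by (simp add: FF_def X_def)
qed

lemma FF_ff_subst: "F \<in> FF m \<Longrightarrow> (\<And>k. 1 \<le> k \<Longrightarrow> k \<le> m \<Longrightarrow> A k \<noteq> {} \<and> A k \<subseteq> {1..n}) \<Longrightarrow> ff_subst A F \<in> FF n"
proof -
  assume F: "F \<in> FF m" and A: "\<And>k. 1 \<le> k \<Longrightarrow> k \<le> m \<Longrightarrow> A k \<noteq> {} \<and> A k \<subseteq> {1..n}"
  have "T \<noteq> {} \<and> T \<subseteq> {1..n}" if T: "T \<in> Poly_Mapping.keys (ff_subst A F)" for T
  proof -
    obtain S where S: "S \<in> Poly_Mapping.keys F" "T = (\<Union>k\<in>S. A k)"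
      using keys_ff_subst[of A F] T by blast
    have FK: "Poly_Mapping.keys F \<subseteq> {S. S \<noteq> {} \<and> S \<subseteq> {1..m}}" using F by (simp add: FF_def)
    have "S \<in> {S. S \<noteq> {} \<and> S \<subseteq> {1..m}}" by (rule subsetD[OF FK S(1)])
    then have Sp: "S \<noteq> {}" "S \<subseteq> {1..m}" by simp_all
    then obtain k where k: "k \<in> S" by blast
    then have k1: "1 \<le> k" "k \<le> m" using Sp by auto
    have "A k \<subseteq> T" using S(2) k by blast
    moreover have "A k \<noteq> {}" using A[OF k1] by blast
    moreover have "T \<subseteq> {1..n}"
    proof
      fix t assume "t \<in> T"
      then obtain k' where k': "k' \<in> S" "t \<in> A k'" using S(2) by blast
      then have "1 \<le> k'" "k' \<le> m" using Sp by auto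
      then have "A k' \<subseteq> {1..n}" using A by blast
      then show "t \<in> {1..n}" using k' by blast
    qed
    ultimately show ?thesis by blast
  qed
  then show ?thesis unfolding FF_def by blast
qed

lemma FF_of: "S \<noteq> {} \<Longrightarrow> S \<subseteq> {1..n} \<Longrightarrow> frag_of S \<in> FF n"
  unfolding FF_def by simp

lemma ff_closed:
  assumes "1 \<le> m" "1 \<le> n" "x \<in> FF m" "y \<in> FF n" "1 \<le> i" "i \<le> m"
  shows "ff_comp x i n y \<in> FF (m + n - 1)"
  unfolding ff_comp_alt
proof (intro FF_add)
  show "frag_of (Sblock i n) \<in> FF (m + n - 1)"
    by (rule FF_of) (use assms in \<open>auto simp: Sblock_def\<close>)
  show "ff_subst (Oi i n) x \<in> FF (m + n - 1)"
    by (rule FF_ff_subst[OF assms(3)]) (use assms in \<open>auto simp: Oi_def Sblock_def\<close>)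
  show "ff_subst (Ii i) y \<in> FF (m + n - 1)"
    by (rule FF_ff_subst[OF assms(4)]) (use assms in \<open>auto simp: Ii_def\<close>)
qed

lemma ff_left_unit: "1 \<le> n \<Longrightarrow> x \<in> FF n \<Longrightarrow> ff_comp ff_unit 1 n x = x"
  unfolding ff_comp_alt ff_unit_def
  by (simp add: ff_subst_minus ff_subst_of Oi_def Ii_def ff_subst_id)

lemma ff_right_unit: "1 \<le> m \<Longrightarrow> x \<in> FF m \<Longrightarrow> 1 \<le> i \<Longrightarrow> i \<le> m \<Longrightarrow> ff_comp x i 1 ff_unit = x"
proof -
  assume "1 \<le> i"
  have "ff_subst (Oi i 1) x = x" by (rule ff_subst_cong_id) (auto simp: Oi_def Sblock_def)
  then show ?thesis using \<open>1 \<le> i\<close>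
    by (simp add: ff_comp_alt ff_unit_def ff_subst_minus ff_subst_of Ii_def Sblock_def)
qed

lemma UN_cong_on: "(\<And>k. k \<in> S \<Longrightarrow> A k = B k) \<Longrightarrow> (\<Union>k\<in>S. A k) = (\<Union>k\<in>S. B k)"
  by auto

lemma ff_seq:
  assumes "1 \<le> m" "1 \<le> n" "1 \<le> p" "x \<in> FF m" "y \<in> FF n" "z \<in> FF p"
    "1 \<le> i" "i \<le> m" "1 \<le> j" "j \<le> n"
  shows "ff_comp (ff_comp x i n y) (i + j - 1) p z = ff_comp x i (n + p - 1) (ff_comp y j p z)"
proof -
  have a: "(\<Union>k\<in>Sblock i n. Oi (i+j-1) p k) = Sblock i (n+p-1)"
  proof (rule set_eqI, rule iffI)
    fix t assume "t \<in> (\<Union>k\<in>Sblock i n. Oi (i+j-1) p k)"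
    then show "t \<in> Sblock i (n+p-1)" using assms by (auto simp: Oi_def Sblock_def split: if_splits)
  next
    fix t assume t: "t \<in> Sblock i (n+p-1)"
    consider "t < i+j-1" | "i+j-1 \<le> t" "t < i+j-1+p" | "i+j-1+p \<le> t" by linarith
    then show "t \<in> (\<Union>k\<in>Sblock i n. Oi (i+j-1) p k)"
    proof cases
      case 1 then show ?thesis using t assms by (auto simp: Oi_def Sblock_def intro!: bexI[where x=t])
    next
      case 2 then show ?thesis using t assms by (auto simp: Oi_def Sblock_def intro!: bexI[where x="i+j-1"])
    next
      case 3 then show ?thesis using t assms by (auto simp: Oi_def Sblock_def intro!: bexI[where x="t+1-p"])
    qed
  qed
  have b: "(\<Union>k\<in>Sblock j p. Ii i k) = Sblock (i+j-1) p"
  proof (rule set_eqI, rule iffI)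
    fix t assume "t \<in> (\<Union>k\<in>Sblock j p. Ii i k)"
    then show "t \<in> Sblock (i+j-1) p" using assms by (auto simp: Ii_def Sblock_def)
  next
    fix t assume t: "t \<in> Sblock (i+j-1) p"
    then show "t \<in> (\<Union>k\<in>Sblock j p. Ii i k)" using assms
      by (auto simp: Ii_def Sblock_def intro!: bexI[where x="t+1-i"])
  qed
  have c: "ff_subst (\<lambda>k. \<Union>l\<in>Oi i n k. Oi (i+j-1) p l) x = ff_subst (Oi i (n+p-1)) x"
    apply (rule ff_subst_cong)
    subgoal for k using FF_keys[OF assms(4), of k] a assms by (auto simp: Oi_def)
    done
  have d: "ff_subst (\<lambda>k. \<Union>l\<in>Ii i k. Oi (i+j-1) p l) y = ff_subst (\<lambda>k. \<Union>l\<in>Oi j p k. Ii i l) y"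
    apply (rule ff_subst_cong)
    subgoal for k using FF_keys[OF assms(5), of k] b assms by (auto simp: Oi_def Ii_def)
    done
  have e: "ff_subst (Ii (i+j-1)) z = ff_subst (\<lambda>k. \<Union>l\<in>Ii j k. Ii i l) z"
    apply (rule ff_subst_cong)
    subgoal for k using FF_keys[OF assms(6), of k] assms by (auto simp: Ii_def)
    done
  show ?thesis
    unfolding ff_comp_alt ff_subst_add ff_subst_of ff_subst_compose a b c d e
    by (simp add: ac_simps)
qed

lemma ff_par:
  assumes "1 \<le> m" "1 \<le> n" "1 \<le> p" "x \<in> FF m" "y \<in> FF n" "z \<in> FF p"
    "1 \<le> i" "i < j" "j \<le> m"
  shows "ff_comp (ff_comp x i n y) (j + n - 1) p z = ff_comp (ff_comp x j p z) i n y"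
proof -
  have a: "(\<Union>k\<in>Sblock i n. Oi (j+n-1) p k) = Sblock i n"
    using assms by (auto simp: Oi_def Sblock_def split: if_splits)
  have b: "(\<Union>k\<in>Sblock j p. Oi i n k) = Sblock (j+n-1) p"
  proof (rule set_eqI, rule iffI)
    fix t assume "t \<in> (\<Union>k\<in>Sblock j p. Oi i n k)"
    then show "t \<in> Sblock (j+n-1) p" using assms by (auto simp: Oi_def Sblock_def split: if_splits)
  next
    fix t assume t: "t \<in> Sblock (j+n-1) p"
    then show "t \<in> (\<Union>k\<in>Sblock j p. Oi i n k)" using assms
      by (auto simp: Oi_def Sblock_def intro!: bexI[where x="t+1-n"])
  qed
  have c: "ff_subst (\<lambda>k. \<Union>l\<in>Oi i n k. Oi (j+n-1) p l) x = ff_subst (\<lambda>k. \<Union>l\<in>Oi j p k. Oi i n l) x"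
    apply (rule ff_subst_cong)
    subgoal for k using FF_keys[OF assms(4), of k] a b assms by (auto simp: Oi_def)
    done
  have d: "ff_subst (\<lambda>k. \<Union>l\<in>Ii i k. Oi (j+n-1) p l) y = ff_subst (Ii i) y"
    apply (rule ff_subst_cong)
    subgoal for k using FF_keys[OF assms(5), of k] assms by (auto simp: Oi_def Ii_def)
    done
  have e: "ff_subst (Ii (j+n-1)) z = ff_subst (\<lambda>k. \<Union>l\<in>Ii j k. Oi i n l) z"
    apply (rule ff_subst_cong)
    subgoal for k using FF_keys[OF assms(6), of k] assms by (auto simp: Ii_def Oi_def)
    done
  show ?thesis
    unfolding ff_comp_alt ff_subst_add ff_subst_of ff_subst_compose a b c d e
    by (simp add: ac_simps)
qed

lemma ff_operad: "is_ns_set_operad FF ff_comp ff_unit"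
  unfolding is_ns_set_operad_def
  using ff_closed ff_left_unit ff_right_unit ff_seq ff_par
  by (auto simp: FF_def ff_unit_def)




lemma poly_mapping_sum_monomials:
  "(\<Sum>a\<in>Poly_Mapping.keys p. Poly_Mapping.single a (Poly_Mapping.lookup p a)) = p"
  by (rule poly_mapping_eqI) (simp add: lookup_sum lookup_single when_def in_keys_iff)

definition pmono :: "(nat \<Rightarrow> 'b::comm_semiring_1) \<Rightarrow> (nat \<Rightarrow>\<^sub>0 nat) \<Rightarrow> 'b" where
  "pmono \<sigma> m = (\<Prod>j\<in>Poly_Mapping.keys m. \<sigma> j ^ Poly_Mapping.lookup m j)"

lemma mono_superset:
  assumes "finite K" "Poly_Mapping.keys m \<subseteq> K"
  shows "pmono \<sigma> m = (\<Prod>j\<in>K. \<sigma> j ^ Poly_Mapping.lookup m j)"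
  unfolding pmono_def
  by (rule prod.mono_neutral_left) (use assms in \<open>auto simp: in_keys_iff\<close>)

lemma mono_add: "pmono \<sigma> (a + b) = pmono \<sigma> a * pmono \<sigma> b"
proof -
  let ?K = "Poly_Mapping.keys a \<union> Poly_Mapping.keys b"
  have "pmono \<sigma> (a + b) = (\<Prod>j\<in>?K. \<sigma> j ^ Poly_Mapping.lookup (a + b) j)"
    by (rule mono_superset) (auto simp: keys_add)
  also have "\<dots> = (\<Prod>j\<in>?K. \<sigma> j ^ Poly_Mapping.lookup a j * \<sigma> j ^ Poly_Mapping.lookup b j)"
    by (simp add: lookup_add power_add)
  also have "\<dots> = pmono \<sigma> a * pmono \<sigma> b"
    by (simp add: prod.distrib mono_superset[of ?K])
  finally show ?thesis .
qed

lemma mono_0 [simp]: "pmono \<sigma> 0 = 1"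
  by (simp add: pmono_def)

lemma mono_single: "pmono \<sigma> (Poly_Mapping.single j e) = \<sigma> j ^ e"
  by (simp add: pmono_def)

definition rhom :: "(rat \<Rightarrow> 'b::comm_ring_1) \<Rightarrow> bool" where
  "rhom \<kappa> \<longleftrightarrow> \<kappa> 0 = 0 \<and> \<kappa> 1 = 1 \<and> (\<forall>a b. \<kappa> (a + b) = \<kappa> a + \<kappa> b) \<and> (\<forall>a b. \<kappa> (a * b) = \<kappa> a * \<kappa> b)"

definition gsub :: "(rat \<Rightarrow> 'b::comm_ring_1) \<Rightarrow> (nat \<Rightarrow> 'b) \<Rightarrow> mpoly \<Rightarrow> 'b" where
  "gsub \<kappa> \<sigma> p = (\<Sum>m\<in>Poly_Mapping.keys p. \<kappa> (Poly_Mapping.lookup p m) * pmono \<sigma> m)"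

context
  fixes \<kappa> :: "rat \<Rightarrow> 'b::comm_ring_1"
  assumes rh: "rhom \<kappa>"
begin

lemma k0: "\<kappa> 0 = 0" and k1: "\<kappa> 1 = 1" and kadd: "\<kappa> (a + b) = \<kappa> a + \<kappa> b"
  and kmult: "\<kappa> (a * b) = \<kappa> a * \<kappa> b"
  using rh unfolding rhom_def by auto

lemma gsub_superset:
  assumes "finite K" "Poly_Mapping.keys p \<subseteq> K"
  shows "gsub \<kappa> \<sigma> p = (\<Sum>m\<in>K. \<kappa> (Poly_Mapping.lookup p m) * pmono \<sigma> m)"
  unfolding gsub_def
  by (rule sum.mono_neutral_left) (use assms in \<open>auto simp: in_keys_iff k0\<close>)

lemma gsub_add: "gsub \<kappa> \<sigma> (p + q) = gsub \<kappa> \<sigma> p + gsub \<kappa> \<sigma> q"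
proof -
  let ?K = "Poly_Mapping.keys p \<union> Poly_Mapping.keys q"
  have "gsub \<kappa> \<sigma> (p + q) = (\<Sum>m\<in>?K. \<kappa> (Poly_Mapping.lookup (p + q) m) * pmono \<sigma> m)"
    by (rule gsub_superset) (auto simp: keys_add)
  also have "\<dots> = (\<Sum>m\<in>?K. \<kappa> (Poly_Mapping.lookup p m) * pmono \<sigma> m + \<kappa> (Poly_Mapping.lookup q m) * pmono \<sigma> m)"
    by (simp add: lookup_add kadd algebra_simps)
  also have "\<dots> = gsub \<kappa> \<sigma> p + gsub \<kappa> \<sigma> q"
    by (simp add: sum.distrib gsub_superset[of ?K])
  finally show ?thesis .
qed

lemma gsub_0 [simp]: "gsub \<kappa> \<sigma> 0 = 0"
  by (simp add: gsub_def)

lemma gsub_single: "gsub \<kappa> \<sigma> (Poly_Mapping.single m c) = \<kappa> c * pmono \<sigma> m"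
  by (cases "c = 0") (simp_all add: gsub_def k0)

lemma gsub_sum: "gsub \<kappa> \<sigma> (\<Sum>i\<in>I. f i) = (\<Sum>i\<in>I. gsub \<kappa> \<sigma> (f i))"
  by (induction I rule: infinite_finite_induct) (simp_all add: gsub_add)

lemma gsub_uminus: "gsub \<kappa> \<sigma> (- p) = - gsub \<kappa> \<sigma> p"
  using gsub_add[where p="-p" and q=p and \<sigma>=\<sigma>] by (simp add: eq_neg_iff_add_eq_0)

lemma gsub_diff: "gsub \<kappa> \<sigma> (p - q) = gsub \<kappa> \<sigma> p - gsub \<kappa> \<sigma> q"
  unfolding diff_conv_add_uminus gsub_add gsub_uminus ..

lemma gsub_one: "gsub \<kappa> \<sigma> 1 = 1"
  using gsub_single[where m=0 and c=1 and \<sigma>=\<sigma>] by (simp add: k1)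

lemma gsub_mult: "gsub \<kappa> \<sigma> (p * q) = gsub \<kappa> \<sigma> p * gsub \<kappa> \<sigma> q"
proof -
  have "p * q = (\<Sum>a\<in>Poly_Mapping.keys p. Poly_Mapping.single a (Poly_Mapping.lookup p a))
      * (\<Sum>b\<in>Poly_Mapping.keys q. Poly_Mapping.single b (Poly_Mapping.lookup q b))"
    by (simp add: poly_mapping_sum_monomials)
  also have "\<dots> = (\<Sum>a\<in>Poly_Mapping.keys p. \<Sum>b\<in>Poly_Mapping.keys q.
      Poly_Mapping.single (a + b) (Poly_Mapping.lookup p a * Poly_Mapping.lookup q b))"
    by (simp only: sum_product mult_single)
  finally have pq: "p * q = \<dots>" .
  show ?thesis
    unfolding pq gsub_sum gsub_single
    by (simp add: gsub_def kmult mono_add sum_product mult_ac)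
qed

lemma gsub_prod: "gsub \<kappa> \<sigma> (\<Prod>i\<in>I. f i) = (\<Prod>i\<in>I. gsub \<kappa> \<sigma> (f i))"
  by (induction I rule: infinite_finite_induct) (simp_all add: gsub_mult gsub_one)

lemma gsub_power: "gsub \<kappa> \<sigma> (p ^ n) = gsub \<kappa> \<sigma> p ^ n"
  by (induction n) (simp_all add: gsub_mult gsub_one)

lemma gsub_pvar: "gsub \<kappa> \<sigma> (pvar j) = \<sigma> j"
  by (simp add: pvar_def gsub_single k1 mono_single)

lemma gsub_const: "gsub \<kappa> \<sigma> (Poly_Mapping.single 0 c) = \<kappa> c"
  by (simp add: gsub_single)

lemma gsub_mono: "gsub \<kappa> \<tau> (pmono \<sigma> m) = pmono (\<lambda>j. gsub \<kappa> \<tau> (\<sigma> j)) m"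
  by (simp add: pmono_def gsub_prod gsub_power)

end

lemma rhom_single: "rhom (Poly_Mapping.single 0 :: rat \<Rightarrow> mpoly)"
  unfolding rhom_def by (simp add: single_add mult_single)

lemma psubst_gsub: "psubst \<sigma> = gsub (Poly_Mapping.single 0) \<sigma>"
  by (simp add: fun_eq_iff psubst_def gsub_def pmono_def)

lemma psubst_mono: "psubst \<sigma> p = (\<Sum>m\<in>Poly_Mapping.keys p. Poly_Mapping.single 0 (Poly_Mapping.lookup p m) * pmono \<sigma> m)"
  by (simp add: psubst_def pmono_def)

lemma gsub_psubst:
  assumes "rhom \<kappa>"
  shows "gsub \<kappa> \<tau> (psubst \<sigma> p) = gsub \<kappa> (\<lambda>j. gsub \<kappa> \<tau> (\<sigma> j)) p"
proof -
  have "gsub \<kappa> \<tau> (psubst \<sigma> p) = (\<Sum>m\<in>Poly_Mapping.keys p. \<kappa> (Poly_Mapping.lookup p m) * pmono (\<lambda>j. gsub \<kappa> \<tau> (\<sigma> j)) m)"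
    unfolding psubst_mono gsub_sum[OF assms] gsub_mult[OF assms] gsub_const[OF assms] gsub_mono[OF assms] ..
  also have "\<dots> = gsub \<kappa> (\<lambda>j. gsub \<kappa> \<tau> (\<sigma> j)) p"
    unfolding gsub_def ..
  finally show ?thesis .
qed

lemma pvar_power: "pvar j ^ e = Poly_Mapping.single (Poly_Mapping.single j e) 1"
  by (induction e) (simp_all add: pvar_def mult_single single_add[symmetric] add.commute)

lemma prod_single_mono: "(\<Prod>j\<in>K. Poly_Mapping.single (f j) (1::rat)) = Poly_Mapping.single (\<Sum>j\<in>K. f j) 1"
  by (induction K rule: infinite_finite_induct) (simp_all add: mult_single)

lemma mono_pvar: "pmono pvar m = Poly_Mapping.single m 1"
proof -
  have "pmono pvar m = (\<Prod>j\<in>Poly_Mapping.keys m. Poly_Mapping.single (Poly_Mapping.single j (Poly_Mapping.lookup m j)) 1)"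
    by (simp add: pmono_def pvar_power)
  also have "\<dots> = Poly_Mapping.single (\<Sum>j\<in>Poly_Mapping.keys m. Poly_Mapping.single j (Poly_Mapping.lookup m j)) 1"
    by (rule prod_single_mono)
  also have "\<dots> = Poly_Mapping.single m 1"
    by (simp add: poly_mapping_sum_monomials)
  finally show ?thesis .
qed

lemma psubst_pvar: "psubst pvar p = p"
  unfolding psubst_def
  by (simp add: pmono_def[symmetric] mono_pvar mult_single poly_mapping_sum_monomials)

lemma psubst_psubst: "psubst \<tau> (psubst \<sigma> p) = psubst (\<lambda>j. psubst \<tau> (\<sigma> j)) p"
  using gsub_psubst[OF rhom_single, of \<tau> \<sigma> p] by (simp add: psubst_gsub)

lemmas ps_add = gsub_add[OF rhom_single, folded psubst_gsub]
lemmas ps_mult = gsub_mult[OF rhom_single, folded psubst_gsub]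
lemmas ps_one = gsub_one[OF rhom_single, folded psubst_gsub]
lemmas ps_0 = gsub_0[OF rhom_single, folded psubst_gsub]
lemmas ps_diff = gsub_diff[OF rhom_single, folded psubst_gsub]
lemmas ps_sum = gsub_sum[OF rhom_single, folded psubst_gsub]
lemmas ps_prod = gsub_prod[OF rhom_single, folded psubst_gsub]
lemmas ps_pvar = gsub_pvar[OF rhom_single, folded psubst_gsub]




section \<open>Substitution into fractions\<close>

definition linv :: "(nat \<Rightarrow> mpoly) \<Rightarrow> (nat \<Rightarrow> mpoly) \<Rightarrow> bool" where
  "linv \<sigma> \<tau> \<longleftrightarrow> (\<forall>k. psubst \<tau> (\<sigma> k) = pvar k)"

lemma linv_inv: "linv \<sigma> \<tau> \<Longrightarrow> psubst \<tau> (psubst \<sigma> p) = p"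
  unfolding psubst_psubst linv_def by (simp add: psubst_pvar)

lemma linv_nz: "linv \<sigma> \<tau> \<Longrightarrow> q \<noteq> 0 \<Longrightarrow> psubst \<sigma> q \<noteq> 0"
  using linv_inv[of \<sigma> \<tau> q] ps_0 by metis

lemma rsubst_Fract:
  assumes L: "linv \<sigma> \<tau>" and q: "q \<noteq> 0"
  shows "rsubst \<sigma> (Fract p q) = Fract (psubst \<sigma> p) (psubst \<sigma> q)"
  unfolding rsubst_def
proof (rule someI2[where a="Fract (psubst \<sigma> p) (psubst \<sigma> q)"])
  show "\<exists>p' q'. q' \<noteq> 0 \<and> Fract p q = Fract p' q' \<and> Fract (psubst \<sigma> p) (psubst \<sigma> q) = Fract (psubst \<sigma> p') (psubst \<sigma> q')"
    using q by blast
next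
  fix y assume "\<exists>p' q'. q' \<noteq> 0 \<and> Fract p q = Fract p' q' \<and> y = Fract (psubst \<sigma> p') (psubst \<sigma> q')"
  then obtain p' q' where q': "q' \<noteq> 0" and e: "Fract p q = Fract p' q'" and y: "y = Fract (psubst \<sigma> p') (psubst \<sigma> q')"
    by blast
  have "p * q' = p' * q" using e q q' by (simp add: eq_fract)
  then have "psubst \<sigma> p * psubst \<sigma> q' = psubst \<sigma> p' * psubst \<sigma> q"
    by (metis ps_mult)
  then show "y = Fract (psubst \<sigma> p) (psubst \<sigma> q)"
    unfolding y using linv_nz[OF L q] linv_nz[OF L q'] by (simp add: eq_fract)
qed

lemma rsubst_Fract1: "linv \<sigma> \<tau> \<Longrightarrow> rsubst \<sigma> (Fract p 1) = Fract (psubst \<sigma> p) 1"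
  using rsubst_Fract[of \<sigma> \<tau> 1 p] by (simp add: ps_one)

lemma rsubst_one: "linv \<sigma> \<tau> \<Longrightarrow> rsubst \<sigma> 1 = 1"
  using rsubst_Fract1[of \<sigma> \<tau> 1] by (simp add: ps_one One_fract_def)

lemma rsubst_zero: "linv \<sigma> \<tau> \<Longrightarrow> rsubst \<sigma> 0 = 0"
  using rsubst_Fract1[of \<sigma> \<tau> 0] by (simp add: ps_0 Zero_fract_def)

lemma rsubst_mult: assumes L: "linv \<sigma> \<tau>" shows "rsubst \<sigma> (x * y) = rsubst \<sigma> x * rsubst \<sigma> y"
proof -
  obtain a b where x: "x = Fract a b" "b \<noteq> 0" by (cases x)
  obtain c d where y: "y = Fract c d" "d \<noteq> 0" by (cases y)
  show ?thesis
    using x y by (simp add: rsubst_Fract[OF L] ps_mult)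
qed

lemma rsubst_inverse: assumes L: "linv \<sigma> \<tau>" shows "rsubst \<sigma> (inverse x) = inverse (rsubst \<sigma> x)"
proof -
  obtain a b where x: "x = Fract a b" "b \<noteq> 0" by (cases x)
  show ?thesis
  proof (cases "a = 0")
    case True
    then have "x = 0" using x by (simp add: fract_collapse)
    then show ?thesis by (simp add: rsubst_zero[OF L])
  next
    case False
    then show ?thesis using x by (simp add: rsubst_Fract[OF L])
  qed
qed

lemma rsubst_power: "linv \<sigma> \<tau> \<Longrightarrow> rsubst \<sigma> (x ^ n) = rsubst \<sigma> x ^ n"
  by (induction n) (simp_all add: rsubst_one rsubst_mult)

lemma rsubst_powi: "linv \<sigma> \<tau> \<Longrightarrow> rsubst \<sigma> (x powi k) = rsubst \<sigma> x powi k"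
  by (simp add: power_int_def rsubst_power rsubst_inverse)

lemma rsubst_prod: "linv \<sigma> \<tau> \<Longrightarrow> rsubst \<sigma> (\<Prod>i\<in>I. f i) = (\<Prod>i\<in>I. rsubst \<sigma> (f i))"
  by (induction I rule: infinite_finite_induct) (simp_all add: rsubst_one rsubst_mult)

section \<open>Evaluation of formal fractions\<close>

definition ev :: "(nat set \<Rightarrow> 'a::field) \<Rightarrow> formal_fraction \<Rightarrow> 'a" where
  "ev L F = (\<Prod>S\<in>Poly_Mapping.keys F. L S powi Poly_Mapping.lookup F S)"

lemma ev_superset:
  assumes "finite K" "Poly_Mapping.keys F \<subseteq> K"
  shows "ev L F = (\<Prod>S\<in>K. L S powi Poly_Mapping.lookup F S)"
  unfolding ev_def
  by (rule prod.mono_neutral_left) (use assms in \<open>auto simp: in_keys_iff\<close>)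

lemma ev_add:
  assumes "\<And>S. S \<in> Poly_Mapping.keys F \<union> Poly_Mapping.keys G \<Longrightarrow> L S \<noteq> 0"
  shows "ev L (F + G) = ev L F * ev L G"
proof -
  let ?K = "Poly_Mapping.keys F \<union> Poly_Mapping.keys G"
  have "ev L (F + G) = (\<Prod>S\<in>?K. L S powi Poly_Mapping.lookup (F + G) S)"
    by (rule ev_superset) (auto simp: keys_add)
  also have "\<dots> = (\<Prod>S\<in>?K. L S powi Poly_Mapping.lookup F S * L S powi Poly_Mapping.lookup G S)"
    by (rule prod.cong) (use assms in \<open>auto simp: lookup_add power_int_add\<close>)
  also have "\<dots> = ev L F * ev L G"
    by (simp add: prod.distrib ev_superset[of ?K])
  finally show ?thesis .
qed

lemma ev_minus: "ev L (- F) = inverse (ev L F)"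
  unfolding ev_def by (simp add: power_int_minus prod_inversef[symmetric] o_def)

lemma ev_diff:
  assumes "\<And>S. S \<in> Poly_Mapping.keys F \<union> Poly_Mapping.keys G \<Longrightarrow> L S \<noteq> 0"
  shows "ev L (F - G) = ev L F / ev L G"
  using ev_add[of "F" "-G" L] assms by (simp add: ev_minus divide_inverse)

lemma ev_of: "ev L (frag_of S) = L S"
  by (simp add: ev_def)

lemma ev_0: "ev L 0 = 1"
  by (simp add: ev_def)

lemma ev_cong: "(\<And>S. S \<in> Poly_Mapping.keys F \<Longrightarrow> L S = L' S) \<Longrightarrow> ev L F = ev L' F"
  unfolding ev_def by simp

lemma ev_nonzero: "(\<And>S. S \<in> Poly_Mapping.keys F \<Longrightarrow> L S \<noteq> 0) \<Longrightarrow> ev L F \<noteq> 0"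
  unfolding ev_def by (simp add: power_int_eq_0_iff)

lemma rsubst_ev: "linv \<sigma> \<tau> \<Longrightarrow> rsubst \<sigma> (ev L F) = ev (\<lambda>S. rsubst \<sigma> (L S)) F"
  unfolding ev_def by (simp add: rsubst_prod rsubst_powi)

lemma ev_ff_subst:
  assumes F: "Poly_Mapping.keys F \<subseteq> U"
    and nz: "\<And>S. S \<in> U \<Longrightarrow> L (\<Union>k\<in>S. A k) \<noteq> 0"
  shows "ev L (ff_subst A F) = ev (\<lambda>S. L (\<Union>k\<in>S. A k)) F"
proof -
  have "Poly_Mapping.keys F \<subseteq> U \<and> ev L (ff_subst A F) = ev (\<lambda>S. L (\<Union>k\<in>S. A k)) F"
    using F
  proof (induction F rule: frag_induction)
    case zero
    then show ?case by (simp add: ff_subst_0 ev_0)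
  next
    case (one x)
    then show ?case by (simp add: ff_subst_of ev_of)
  next
    case (diff a b)
    have ka: "Poly_Mapping.keys (ff_subst A a) \<subseteq> (\<lambda>S. \<Union>k\<in>S. A k) ` U"
      using keys_ff_subst[of A a] diff.IH(1) by blast
    have kb: "Poly_Mapping.keys (ff_subst A b) \<subseteq> (\<lambda>S. \<Union>k\<in>S. A k) ` U"
      using keys_ff_subst[of A b] diff.IH(2) by blast
    have "ev L (ff_subst A (a - b)) = ev L (ff_subst A a) / ev L (ff_subst A b)"
      unfolding ff_subst_diff by (rule ev_diff) (use ka kb nz in blast)
    also have "\<dots> = ev (\<lambda>S. L (\<Union>k\<in>S. A k)) a / ev (\<lambda>S. L (\<Union>k\<in>S. A k)) b"
      using diff.IH by simp
    also have "\<dots> = ev (\<lambda>S. L (\<Union>k\<in>S. A k)) (a - b)"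
      by (rule ev_diff[symmetric]) (use diff.IH nz in blast)
    finally show ?case using diff.IH keys_diff[of a b] by blast
  qed
  then show ?thesis by blast
qed




definition l0 :: "nat set \<Rightarrow> ratfun" where "l0 S = (\<Sum>j\<in>S. u j)"
definition l1 :: "nat set \<Rightarrow> ratfun" where "l1 S = (\<Prod>j\<in>S. u j) - 1"

lemma phi0_ev: "phi0 = ev l0" by (simp add: fun_eq_iff phi0_def ev_def l0_def)
lemma phi1_ev: "phi1 = ev l1" by (simp add: fun_eq_iff phi1_def ev_def l1_def)

lemma Fract_sum1: "(\<Sum>j\<in>S. Fract (f j) (1::mpoly)) = Fract (\<Sum>j\<in>S. f j) 1"
  by (induction S rule: infinite_finite_induct) (simp_all add: Zero_fract_def)

lemma Fract_prod1: "(\<Prod>j\<in>S. Fract (f j) (1::mpoly)) = Fract (\<Prod>j\<in>S. f j) 1"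
  by (induction S rule: infinite_finite_induct) (simp_all add: One_fract_def)

lemma l0_Fract: "l0 S = Fract (\<Sum>j\<in>S. pvar j) 1"
  by (simp add: l0_def u_def Fract_sum1)

lemma l1_Fract: "l1 S = Fract ((\<Prod>j\<in>S. pvar j) - 1) 1"
  by (simp add: l1_def u_def Fract_prod1 One_fract_def)

lemma Fract1_eq0: "Fract (p::mpoly) 1 = 0 \<longleftrightarrow> p = 0"
  by (simp add: Zero_fract_def eq_fract)

lemma rhom_id: "rhom (\<lambda>x::rat. x)"
  by (simp add: rhom_def)

definition U :: "nat set set" where "U = {S. finite S \<and> S \<noteq> {}}"

lemma l0_nz: assumes "S \<in> U" shows "l0 S \<noteq> 0"
proof
  assume "l0 S = 0"
  then have "(\<Sum>j\<in>S. pvar j) = 0" by (simp add: l0_Fract Fract1_eq0)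
  then have "gsub (\<lambda>x. x) (\<lambda>_. 1) (\<Sum>j\<in>S. pvar j) = 0" by (simp add: gsub_0[OF rhom_id])
  then have "of_nat (card S) = (0::rat)"
    by (simp add: gsub_sum[OF rhom_id] gsub_pvar[OF rhom_id])
  then show False using assms by (simp add: U_def)
qed

lemma l1_nz: assumes "S \<in> U" shows "l1 S \<noteq> 0"
proof
  assume "l1 S = 0"
  then have "(\<Prod>j\<in>S. pvar j) - 1 = 0" by (simp add: l1_Fract Fract1_eq0)
  then have "gsub (\<lambda>x. x) (\<lambda>_. 2) ((\<Prod>j\<in>S. pvar j) - 1) = 0" by (simp add: gsub_0[OF rhom_id])
  then have "(2::rat) ^ card S - 1 = 0"
    by (simp add: gsub_diff[OF rhom_id] gsub_prod[OF rhom_id] gsub_pvar[OF rhom_id] gsub_one[OF rhom_id])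
  then have e: "(2::rat) ^ card S = 1" by simp
  have "card S = 0"
  proof (rule ccontr)
    assume "card S \<noteq> 0"
    then have "(1::rat) < 2 ^ card S" by (intro one_less_power) auto
    then show False using e by simp
  qed
  then show False using assms by (simp add: U_def)
qed

lemma FF_U: "F \<in> FF n \<Longrightarrow> Poly_Mapping.keys F \<subseteq> U"
  unfolding FF_def U_def by (auto dest: finite_subset[OF _ finite_atLeastAtMost] subsetD)

lemma U_image: "S \<in> U \<Longrightarrow> (\<And>k. finite (A k) \<and> A k \<noteq> {}) \<Longrightarrow> (\<Union>k\<in>S. A k) \<in> U"
  unfolding U_def by auto

lemma Oi_fin: "1 \<le> n \<Longrightarrow> finite (Oi i n k) \<and> Oi i n k \<noteq> {}"
  by (auto simp: Oi_def Sblock_def)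

lemma Ii_fin: "finite (Ii i k) \<and> Ii i k \<noteq> {}"
  by (auto simp: Ii_def)

lemma Oi_disj: "1 \<le> n \<Longrightarrow> j \<noteq> j' \<Longrightarrow> Oi i n j \<inter> Oi i n j' = {}"
  by (auto simp: Oi_def Sblock_def split: if_splits)

lemma Ii_disj: "1 \<le> i \<Longrightarrow> j \<noteq> j' \<Longrightarrow> Ii i j \<inter> Ii i j' = {}"
  by (auto simp: Ii_def)

definition tauO :: "nat \<Rightarrow> nat \<Rightarrow> mpoly \<Rightarrow> nat \<Rightarrow> mpoly" where
  "tauO i n c = (\<lambda>j. if j < i then pvar j else if j = i then pvar i else if j < i + n then c else pvar (j + 1 - n))"

definition tauI :: "nat \<Rightarrow> nat \<Rightarrow> mpoly" where
  "tauI i = (\<lambda>j. pvar (j + 1 - i))"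

lemma linv_O0: assumes "1 \<le> n" shows "linv (outer_subst i n (Sigma_poly i n)) (tauO i n 0)"
  unfolding linv_def
proof
  fix k
  show "psubst (tauO i n 0) (outer_subst i n (Sigma_poly i n) k) = pvar k"
  proof (cases "k = i")
    case True
    have "psubst (tauO i n 0) (Sigma_poly i n) = (\<Sum>j\<in>Sblock i n. tauO i n 0 j)"
      by (simp add: Sigma_poly_def ps_sum ps_pvar)
    also have "\<dots> = (\<Sum>j\<in>Sblock i n. if j = i then pvar i else 0)"
      by (rule sum.cong) (auto simp: tauO_def Sblock_def)
    also have "\<dots> = pvar i" using assms by (simp add: Sblock_def)
    finally show ?thesis using True by (simp add: outer_subst_def)
  next
    case False
    then show ?thesis using assms by (auto simp: outer_subst_def ps_pvar tauO_def)
  qed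
qed

lemma linv_O1: assumes "1 \<le> n" shows "linv (outer_subst i n (Pi_poly i n)) (tauO i n 1)"
  unfolding linv_def
proof
  fix k
  show "psubst (tauO i n 1) (outer_subst i n (Pi_poly i n) k) = pvar k"
  proof (cases "k = i")
    case True
    have "psubst (tauO i n 1) (Pi_poly i n) = (\<Prod>j\<in>Sblock i n. tauO i n 1 j)"
      by (simp add: Pi_poly_def ps_prod ps_pvar)
    also have "\<dots> = (\<Prod>j\<in>Sblock i n. if j = i then pvar i else 1)"
      by (rule prod.cong) (auto simp: tauO_def Sblock_def)
    also have "\<dots> = pvar i" using assms by (simp add: Sblock_def)
    finally show ?thesis using True by (simp add: outer_subst_def)
  next
    case False
    then show ?thesis using assms by (auto simp: outer_subst_def ps_pvar tauO_def)
  qed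
qed

lemma linv_I: assumes "1 \<le> i" shows "linv (inner_subst i) (tauI i)"
  unfolding linv_def using assms by (simp add: inner_subst_def tauI_def ps_pvar)

lemma outer0_sum: "1 \<le> n \<Longrightarrow> outer_subst i n (Sigma_poly i n) j = (\<Sum>l\<in>Oi i n j. pvar l)"
  by (simp add: outer_subst_def Oi_def Sigma_poly_def)

lemma outer1_prod: "1 \<le> n \<Longrightarrow> outer_subst i n (Pi_poly i n) j = (\<Prod>l\<in>Oi i n j. pvar l)"
  by (simp add: outer_subst_def Oi_def Pi_poly_def)

lemma inner_sum: "inner_subst i j = (\<Sum>l\<in>Ii i j. pvar l)"
  by (simp add: inner_subst_def Ii_def)

lemma inner_prod: "inner_subst i j = (\<Prod>l\<in>Ii i j. pvar l)"
  by (simp add: inner_subst_def Ii_def)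

lemma rsubst_l0:
  assumes L: "linv \<sigma> \<tau>" and A: "\<And>j. \<sigma> j = (\<Sum>l\<in>A j. pvar l)" and fin: "\<And>j. finite (A j)"
    and disj: "\<And>j j'. j \<noteq> j' \<Longrightarrow> A j \<inter> A j' = {}" and S: "finite S"
  shows "rsubst \<sigma> (l0 S) = l0 (\<Union>k\<in>S. A k)"
proof -
  have "rsubst \<sigma> (l0 S) = Fract (\<Sum>j\<in>S. \<Sum>l\<in>A j. pvar l) 1"
    by (simp add: l0_Fract rsubst_Fract1[OF L] ps_sum ps_pvar A)
  also have "(\<Sum>j\<in>S. \<Sum>l\<in>A j. pvar l) = (\<Sum>l\<in>(\<Union>k\<in>S. A k). pvar l)"
    by (rule sum.UNION_disjoint[symmetric]) (use S fin disj in auto)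
  finally show ?thesis by (simp add: l0_Fract)
qed

lemma rsubst_l1:
  assumes L: "linv \<sigma> \<tau>" and A: "\<And>j. \<sigma> j = (\<Prod>l\<in>A j. pvar l)" and fin: "\<And>j. finite (A j)"
    and disj: "\<And>j j'. j \<noteq> j' \<Longrightarrow> A j \<inter> A j' = {}" and S: "finite S"
  shows "rsubst \<sigma> (l1 S) = l1 (\<Union>k\<in>S. A k)"
proof -
  have "rsubst \<sigma> (l1 S) = Fract ((\<Prod>j\<in>S. \<Prod>l\<in>A j. pvar l) - 1) 1"
    by (simp add: l1_Fract rsubst_Fract1[OF L] ps_prod ps_pvar A ps_diff ps_one)
  also have "(\<Prod>j\<in>S. \<Prod>l\<in>A j. pvar l) = (\<Prod>l\<in>(\<Union>k\<in>S. A k). pvar l)"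
    by (rule prod.UNION_disjoint[symmetric]) (use S fin disj in auto)
  finally show ?thesis by (simp add: l1_Fract)
qed

lemma morph_generic:
  fixes L :: "nat set \<Rightarrow> ratfun"
  assumes nz: "\<And>S. S \<in> U \<Longrightarrow> L S \<noteq> 0"
    and LO: "linv \<sigma>O \<tau>O" and LI: "linv \<sigma>I \<tau>I"
    and hO: "\<And>S. S \<in> U \<Longrightarrow> rsubst \<sigma>O (L S) = L (\<Union>k\<in>S. Oi i n k)"
    and hI: "\<And>S. S \<in> U \<Longrightarrow> rsubst \<sigma>I (L S) = L (\<Union>k\<in>S. Ii i k)"
    and x: "x \<in> FF m" and y: "y \<in> FF n" and n: "1 \<le> n"
  shows "ev L (ff_comp x i n y) = L (Sblock i n) * rsubst \<sigma>O (ev L x) * rsubst \<sigma>I (ev L y)"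
proof -
  have kx: "Poly_Mapping.keys x \<subseteq> U" and ky: "Poly_Mapping.keys y \<subseteq> U"
    using FF_U x y by blast+
  have OU: "(\<Union>k\<in>S. Oi i n k) \<in> U" if "S \<in> U" for S
    using U_image[OF that] Oi_fin[OF n] by blast
  have IU: "(\<Union>k\<in>S. Ii i k) \<in> U" if "S \<in> U" for S
    using U_image[OF that] Ii_fin by blast
  have BU: "Sblock i n \<in> U" using n by (simp add: U_def Sblock_def)
  have k1: "Poly_Mapping.keys (ff_subst (Oi i n) x) \<subseteq> U"
    using keys_ff_subst[of "Oi i n" x] kx OU by blast
  have k2: "Poly_Mapping.keys (ff_subst (Ii i) y) \<subseteq> U"
    using keys_ff_subst[of "Ii i" y] ky IU by blast
  have k12: "Poly_Mapping.keys (frag_of (Sblock i n) + ff_subst (Oi i n) x) \<subseteq> U"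
    using keys_add[of "frag_of (Sblock i n)" "ff_subst (Oi i n) x"] k1 BU by auto
  have "ev L (ff_comp x i n y) = ev L (frag_of (Sblock i n) + ff_subst (Oi i n) x) * ev L (ff_subst (Ii i) y)"
    unfolding ff_comp_alt by (rule ev_add) (use k12 k2 nz in blast)
  also have "ev L (frag_of (Sblock i n) + ff_subst (Oi i n) x) = L (Sblock i n) * ev L (ff_subst (Oi i n) x)"
    by (subst ev_add) (use k1 BU nz in \<open>auto simp: ev_of\<close>)
  also have "ev L (ff_subst (Oi i n) x) = ev (\<lambda>S. L (\<Union>k\<in>S. Oi i n k)) x"
    by (rule ev_ff_subst[OF kx]) (use OU nz in blast)
  also have "\<dots> = rsubst \<sigma>O (ev L x)"
    unfolding rsubst_ev[OF LO] by (rule ev_cong) (use kx hO in auto)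
  also have "ev L (ff_subst (Ii i) y) = ev (\<lambda>S. L (\<Union>k\<in>S. Ii i k)) y"
    by (rule ev_ff_subst[OF ky]) (use IU nz in blast)
  also have "\<dots> = rsubst \<sigma>I (ev L y)"
    unfolding rsubst_ev[OF LI] by (rule ev_cong) (use ky hI in auto)
  finally show ?thesis .
qed

lemma phi0_comp:
  assumes "1 \<le> m" "1 \<le> n" "x \<in> FF m" "y \<in> FF n" "1 \<le> i" "i \<le> m"
  shows "phi0 (ff_comp x i n y) = mould0_comp (phi0 x) i n (phi0 y)"
proof -
  have "ev l0 (ff_comp x i n y) = l0 (Sblock i n) * rsubst (outer_subst i n (Sigma_poly i n)) (ev l0 x)
      * rsubst (inner_subst i) (ev l0 y)"
  proof (rule morph_generic[OF _ linv_O0 linv_I])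
    fix S assume S: "S \<in> U"
    then have fS: "finite S" by (simp add: U_def)
    show "l0 S \<noteq> 0" by (rule l0_nz[OF S])
    show "rsubst (outer_subst i n (Sigma_poly i n)) (l0 S) = l0 (\<Union>k\<in>S. Oi i n k)"
      by (rule rsubst_l0[OF linv_O0 outer0_sum]) (use assms Oi_fin Oi_disj fS in auto)
    show "rsubst (inner_subst i) (l0 S) = l0 (\<Union>k\<in>S. Ii i k)"
      by (rule rsubst_l0[OF linv_I inner_sum]) (use assms Ii_fin Ii_disj fS in auto)
  qed (use assms in auto)
  then show ?thesis
    by (simp add: phi0_ev mould0_comp_def l0_Fract Sigma_poly_def)
qed

lemma phi1_comp:
  assumes "1 \<le> m" "1 \<le> n" "x \<in> FF m" "y \<in> FF n" "1 \<le> i" "i \<le> m"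
  shows "phi1 (ff_comp x i n y) = mould1_comp (phi1 x) i n (phi1 y)"
proof -
  have "ev l1 (ff_comp x i n y) = l1 (Sblock i n) * rsubst (outer_subst i n (Pi_poly i n)) (ev l1 x)
      * rsubst (inner_subst i) (ev l1 y)"
  proof (rule morph_generic[OF _ linv_O1 linv_I])
    fix S assume S: "S \<in> U"
    then have fS: "finite S" by (simp add: U_def)
    show "l1 S \<noteq> 0" by (rule l1_nz[OF S])
    show "rsubst (outer_subst i n (Pi_poly i n)) (l1 S) = l1 (\<Union>k\<in>S. Oi i n k)"
      by (rule rsubst_l1[OF linv_O1 outer1_prod]) (use assms Oi_fin Oi_disj fS in auto)
    show "rsubst (inner_subst i) (l1 S) = l1 (\<Union>k\<in>S. Ii i k)"
      by (rule rsubst_l1[OF linv_I inner_prod]) (use assms Ii_fin Ii_disj fS in auto)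
  qed (use assms in auto)
  then show ?thesis
    by (simp add: phi1_ev mould1_comp_def l1_Fract Pi_poly_def One_fract_def)
qed




lemma pvars_0 [simp]: "pvars 0 = {}" by (simp add: pvars_def)
lemma pvars_1 [simp]: "pvars 1 = {}" by (simp add: pvars_def)
lemma pvars_pvar: "pvars (pvar j) = {j}" by (simp add: pvars_def pvar_def)

lemma pvars_add: "pvars (p + q) \<subseteq> pvars p \<union> pvars q"
  unfolding pvars_def using keys_add[of p q] by blast

lemma pvars_uminus: "pvars (- p) = pvars p"
  unfolding pvars_def by (simp add: in_keys_iff keys_def)

lemma pvars_diff: "pvars (p - q) \<subseteq> pvars p \<union> pvars q"
  using pvars_add[of p "-q"] pvars_uminus[of q] by simp

lemma pvars_mult: "pvars (p * q) \<subseteq> pvars p \<union> pvars q"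
proof
  fix j assume "j \<in> pvars (p * q)"
  then obtain m where m: "m \<in> Poly_Mapping.keys (p * q)" "j \<in> Poly_Mapping.keys m"
    unfolding pvars_def by blast
  then obtain a b where ab: "m = a + b" "a \<in> Poly_Mapping.keys p" "b \<in> Poly_Mapping.keys q"
    using keys_mult[of p q] by blast
  then have "j \<in> Poly_Mapping.keys a \<union> Poly_Mapping.keys b" using m(2) keys_add[of a b] by blast
  then show "j \<in> pvars p \<union> pvars q" using ab unfolding pvars_def by blast
qed

lemma pvars_sum: "pvars (\<Sum>i\<in>I. f i) \<subseteq> (\<Union>i\<in>I. pvars (f i))"
proof (induction I rule: infinite_finite_induct)
  case (insert x F)
  then show ?case using pvars_add[of "f x" "sum f F"] by auto
qed auto

lemma pvars_prod: "pvars (\<Prod>i\<in>I. f i) \<subseteq> (\<Union>i\<in>I. pvars (f i))"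
proof (induction I rule: infinite_finite_induct)
  case (insert x F)
  then show ?case using pvars_mult[of "f x" "prod f F"] by auto
qed auto

lemma Mould_I: "q \<noteq> 0 \<Longrightarrow> pvars p \<subseteq> {1..n} \<Longrightarrow> pvars q \<subseteq> {1..n} \<Longrightarrow> Fract p q \<in> Mould n"
  unfolding Mould_def by blast

lemma Mould_zero: "0 \<in> Mould n"
  using Mould_I[of 1 0 n] by (simp add: Zero_fract_def)

lemma Mould_one: "1 \<in> Mould n"
  using Mould_I[of 1 1 n] by (simp add: One_fract_def)

lemma Mould_mult: assumes "x \<in> Mould n" "y \<in> Mould n" shows "x * y \<in> Mould n"
proof -
  obtain p q where x: "x = Fract p q" "q \<noteq> 0" "pvars p \<subseteq> {1..n}" "pvars q \<subseteq> {1..n}"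
    using assms(1) unfolding Mould_def by blast
  obtain p' q' where y: "y = Fract p' q'" "q' \<noteq> 0" "pvars p' \<subseteq> {1..n}" "pvars q' \<subseteq> {1..n}"
    using assms(2) unfolding Mould_def by blast
  show ?thesis
    unfolding x y mult_fract
    by (rule Mould_I) (use x y pvars_mult[of p p'] pvars_mult[of q q'] in auto)
qed

lemma Mould_inverse: assumes "x \<in> Mould n" shows "inverse x \<in> Mould n"
proof -
  obtain p q where x: "x = Fract p q" "q \<noteq> 0" "pvars p \<subseteq> {1..n}" "pvars q \<subseteq> {1..n}"
    using assms(1) unfolding Mould_def by blast
  show ?thesis
  proof (cases "p = 0")
    case True
    then show ?thesis using x by (simp add: fract_collapse Mould_zero)
  next
    case False
    then show ?thesis unfolding x inverse_fract by (rule Mould_I) (use x in auto)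
  qed
qed

lemma Mould_power: "x \<in> Mould n \<Longrightarrow> x ^ k \<in> Mould n"
  by (induction k) (simp_all add: Mould_one Mould_mult)

lemma Mould_powi: "x \<in> Mould n \<Longrightarrow> x powi k \<in> Mould n"
  by (simp add: power_int_def Mould_power Mould_inverse)

lemma Mould_prod: "(\<And>i. i \<in> I \<Longrightarrow> f i \<in> Mould n) \<Longrightarrow> (\<Prod>i\<in>I. f i) \<in> Mould n"
  by (induction I rule: infinite_finite_induct) (simp_all add: Mould_one Mould_mult)

lemma Mould_ev:
  assumes "F \<in> FF n" "\<And>S. S \<noteq> {} \<Longrightarrow> S \<subseteq> {1..n} \<Longrightarrow> L S \<in> Mould n"
  shows "ev L F \<in> Mould n"
proof -
  have "Poly_Mapping.keys F \<subseteq> {S. S \<noteq> {} \<and> S \<subseteq> {1..n}}" using assms(1) by (simp add: FF_def)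
  then show ?thesis
    unfolding ev_def by (intro Mould_prod Mould_powi assms(2)) auto
qed

lemma l0_Mould: "S \<subseteq> {1..n} \<Longrightarrow> l0 S \<in> Mould n"
  unfolding l0_Fract
  by (rule Mould_I) (use pvars_sum[of pvar S] in \<open>auto simp: pvars_pvar\<close>)

lemma l1_Mould: "S \<subseteq> {1..n} \<Longrightarrow> l1 S \<in> Mould n"
  unfolding l1_Fract
  by (rule Mould_I) (use pvars_diff[of "prod pvar S" 1] pvars_prod[of pvar S] in \<open>auto simp: pvars_pvar\<close>)

lemma phi0_Mould: "F \<in> FF n \<Longrightarrow> phi0 F \<in> Mould n"
  unfolding phi0_ev
proof (rule Mould_ev)
  fix S :: "nat set" assume "S \<subseteq> {1..n}" then show "l0 S \<in> Mould n" by (rule l0_Mould)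
qed

lemma phi1_Mould: "F \<in> FF n \<Longrightarrow> phi1 F \<in> Mould n"
  unfolding phi1_ev
proof (rule Mould_ev)
  fix S :: "nat set" assume "S \<subseteq> {1..n}" then show "l1 S \<in> Mould n" by (rule l1_Mould)
qed

lemma phi0_unit: "phi0 ff_unit = inverse (u 1)"
  by (simp add: phi0_ev ff_unit_def ev_minus ev_of l0_def)

lemma phi1_unit: "phi1 ff_unit = inverse (u 1 - 1)"
  by (simp add: phi1_ev ff_unit_def ev_minus ev_of l1_def)




lemma rhom_pconst: "rhom (\<lambda>c::rat. [:c:])"
  by (simp add: rhom_def)

lemma order_prod_nz:
  fixes f :: "'i \<Rightarrow> 'a::idom poly"
  shows "finite I \<Longrightarrow> (\<And>i. i \<in> I \<Longrightarrow> f i \<noteq> 0) \<Longrightarrow> order a (\<Prod>i\<in>I. f i) = (\<Sum>i\<in>I. order a (f i))"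
proof (induction I rule: finite_induct)
  case empty
  then show ?case by simp
next
  case (insert x F)
  have "(\<Prod>i\<in>F. f i) \<noteq> 0" using insert by simp
  then have "f x * (\<Prod>i\<in>F. f i) \<noteq> 0" using insert by simp
  then show ?case using insert by (simp add: order_mult)
qed

lemma order_power_nz:
  fixes p :: "'a::idom poly"
  shows "p \<noteq> 0 \<Longrightarrow> order a (p ^ k) = k * order a p"
  by (induction k) (simp_all add: order_mult)

lemma powi_split: "(x::'a::field) powi k = x ^ nat k / x ^ nat (-k)"
  by (cases "k \<ge> 0") (auto simp: power_int_def power_inverse divide_inverse)

lemma Fract_power1: "Fract (p::mpoly) 1 ^ k = Fract (p ^ k) 1"
  by (induction k) (simp_all add: One_fract_def)

lemma inj_generic:
  fixes L :: "nat set \<Rightarrow> ratfun" and Lp :: "nat set \<Rightarrow> mpoly"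
  assumes Lfr: "\<And>S. L S = Fract (Lp S) 1"
    and Lnz: "\<And>S. S \<in> U \<Longrightarrow> Lp S \<noteq> 0"
    and sep: "\<And>S0. S0 \<in> U \<Longrightarrow> \<exists>\<tau> r. (\<forall>S\<in>U. \<not> S \<subseteq> S0 \<longrightarrow> poly (gsub (\<lambda>c. [:c:]) \<tau> (Lp S)) r \<noteq> 0)
                 \<and> gsub (\<lambda>c. [:c:]) \<tau> (Lp S0) \<noteq> 0 \<and> order r (gsub (\<lambda>c. [:c:]) \<tau> (Lp S0)) = 1"
    and F: "Poly_Mapping.keys F \<subseteq> U" and G: "Poly_Mapping.keys G \<subseteq> U"
    and eq: "ev L F = ev L G"
  shows "F = G"
proof (rule ccontr)
  assume FG: "F \<noteq> G"
  define H where "H = F - G"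
  have LnzU: "L S \<noteq> 0" if "S \<in> U" for S
    using Lnz[OF that] by (simp add: Lfr Fract1_eq0)
  have HU: "Poly_Mapping.keys H \<subseteq> U" using keys_diff[of F G] F G unfolding H_def by blast
  have "H \<noteq> 0" using FG unfolding H_def by simp
  define K where "K = Poly_Mapping.keys H"
  have Kne: "K \<noteq> {}" and Kfin: "finite K" using \<open>H \<noteq> 0\<close> by (simp_all add: K_def)
  have evG: "ev L G \<noteq> 0" by (rule ev_nonzero) (use G LnzU in blast)
  have evH: "ev L H = 1"
    unfolding H_def using eq evG by (subst ev_diff) (use F G LnzU in auto)
  obtain S1 where "S1 \<in> K" using Kne by blast
  obtain S0 where S0: "S0 \<in> K" and min: "\<And>T. T \<in> K \<Longrightarrow> card S0 \<le> card T"
    using ex_has_least_nat[of "\<lambda>S. S \<in> K" S1 card] \<open>S1 \<in> K\<close> by blast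
  have S0U: "S0 \<in> U" using S0 HU K_def by blast
  then have finS0: "finite S0" by (simp add: U_def)
  have notsub: "\<not> S \<subseteq> S0" if "S \<in> K" "S \<noteq> S0" for S
  proof
    assume "S \<subseteq> S0"
    then have "S < S0" using that by blast
    then have "card S < card S0" using psubset_card_mono[OF finS0] by blast
    then show False using min[OF that(1)] by simp
  qed
  define P where "P = (\<Prod>S\<in>K. Lp S ^ nat (Poly_Mapping.lookup H S))"
  define N where "N = (\<Prod>S\<in>K. Lp S ^ nat (- Poly_Mapping.lookup H S))"
  have "ev L H = (\<Prod>S\<in>K. L S ^ nat (Poly_Mapping.lookup H S)) / (\<Prod>S\<in>K. L S ^ nat (- Poly_Mapping.lookup H S))"
    unfolding ev_def K_def powi_split prod_dividef ..
  also have "\<dots> = Fract P 1 / Fract N 1"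
    by (simp add: Lfr P_def N_def Fract_prod1 Fract_power1)
  finally have e1: "Fract P 1 / Fract N 1 = 1" using evH by simp
  have KU: "S \<in> U" if "S \<in> K" for S using that HU K_def by blast
  have "N \<noteq> 0" unfolding N_def using Kfin Lnz KU by (simp)
  then have "Fract N 1 \<noteq> 0" by (simp add: Fract1_eq0)
  then have "Fract P 1 = Fract N 1" using e1 by (metis divide_eq_1_iff)
  then have PN: "P = N" by (simp add: eq_fract)
  obtain \<tau> r where sepS: "\<And>S. S \<in> U \<Longrightarrow> \<not> S \<subseteq> S0 \<Longrightarrow> poly (gsub (\<lambda>c. [:c:]) \<tau> (Lp S)) r \<noteq> 0"
    and nz0: "gsub (\<lambda>c. [:c:]) \<tau> (Lp S0) \<noteq> 0" and ord0: "order r (gsub (\<lambda>c. [:c:]) \<tau> (Lp S0)) = 1"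
    using sep[OF S0U] by blast
  define h where "h = gsub (\<lambda>c. [:c:]) \<tau>"
  have hnz: "h (Lp S) \<noteq> 0" if "S \<in> K" for S
  proof (cases "S = S0")
    case True then show ?thesis using nz0 h_def by simp
  next
    case False
    then have "poly (h (Lp S)) r \<noteq> 0" using sepS[OF KU[OF that] notsub[OF that False]] h_def by simp
    then show ?thesis by auto
  qed
  have ordS: "order r (h (Lp S)) = (if S = S0 then 1 else 0)" if "S \<in> K" for S
  proof (cases "S = S0")
    case True then show ?thesis using ord0 h_def by simp
  next
    case False
    then have "poly (h (Lp S)) r \<noteq> 0" using sepS[OF KU[OF that] notsub[OF that False]] h_def by simp
    then show ?thesis using False by (simp add: order_0I)
  qed
  have ordpow: "order r (\<Prod>S\<in>K. h (Lp S) ^ e S) = e S0" for e :: "nat set \<Rightarrow> nat"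
  proof -
    have "order r (\<Prod>S\<in>K. h (Lp S) ^ e S) = (\<Sum>S\<in>K. order r (h (Lp S) ^ e S))"
      by (rule order_prod_nz[OF Kfin]) (use hnz in simp)
    also have "\<dots> = (\<Sum>S\<in>K. if S = S0 then e S else 0)"
      by (rule sum.cong) (use hnz ordS in \<open>auto simp: order_power_nz\<close>)
    also have "\<dots> = e S0" using S0 Kfin by simp
    finally show ?thesis .
  qed
  have hP: "h P = (\<Prod>S\<in>K. h (Lp S) ^ nat (Poly_Mapping.lookup H S))"
    unfolding P_def h_def by (simp add: gsub_prod[OF rhom_pconst] gsub_power[OF rhom_pconst])
  have hN: "h N = (\<Prod>S\<in>K. h (Lp S) ^ nat (- Poly_Mapping.lookup H S))"
    unfolding N_def h_def by (simp add: gsub_prod[OF rhom_pconst] gsub_power[OF rhom_pconst])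
  have "nat (Poly_Mapping.lookup H S0) = nat (- Poly_Mapping.lookup H S0)"
    using ordpow[of "\<lambda>S. nat (Poly_Mapping.lookup H S)"] ordpow[of "\<lambda>S. nat (- Poly_Mapping.lookup H S)"]
      hP hN PN by simp
  then have "Poly_Mapping.lookup H S0 = 0" by simp
  then show False using S0 K_def by (simp add: in_keys_iff)
qed

lemma sum_const_smult: "(\<Sum>j\<in>A. p) = smult (of_nat (card A)) (p::rat poly)"
  by (induction A rule: infinite_finite_induct) (simp_all add: smult_add_left distrib_right)

lemma l0_sep:
  assumes S0U: "S0 \<in> U"
  shows "\<exists>\<tau> r. (\<forall>S\<in>U. \<not> S \<subseteq> S0 \<longrightarrow> poly (gsub (\<lambda>c. [:c:]) \<tau> (\<Sum>j\<in>S. pvar j)) r \<noteq> 0)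
                 \<and> gsub (\<lambda>c. [:c:]) \<tau> (\<Sum>j\<in>S0. pvar j) \<noteq> 0 \<and> order r (gsub (\<lambda>c. [:c:]) \<tau> (\<Sum>j\<in>S0. pvar j)) = 1"
proof (intro exI conjI ballI impI)
  define \<tau> :: "nat \<Rightarrow> rat poly" where "\<tau> = (\<lambda>j. if j \<in> S0 then [:0,1:] else 1)"
  have hS: "gsub (\<lambda>c. [:c:]) \<tau> (\<Sum>j\<in>S. pvar j) = (\<Sum>j\<in>S. \<tau> j)" for S
    by (simp add: gsub_sum[OF rhom_pconst] gsub_pvar[OF rhom_pconst])
  {
    fix S assume SU: "S \<in> U" and ns: "\<not> S \<subseteq> S0"
    then obtain j where j: "j \<in> S" "j \<notin> S0" by blast
    have fS: "finite S" using SU by (simp add: U_def)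
    have "(1::rat) \<le> (\<Sum>i\<in>S. poly (\<tau> i) 0)"
      using member_le_sum[of j S "\<lambda>i. poly (\<tau> i) 0"] j fS by (simp add: \<tau>_def)
    then show "poly (gsub (\<lambda>c. [:c:]) \<tau> (\<Sum>j\<in>S. pvar j)) 0 \<noteq> 0"
      unfolding hS poly_sum by auto
  }
  have c: "(of_nat (card S0) :: rat) \<noteq> 0" using S0U by (simp add: U_def)
  have e: "gsub (\<lambda>c. [:c:]) \<tau> (\<Sum>j\<in>S0. pvar j) = smult (of_nat (card S0)) [:0,1:]"
    unfolding hS by (simp add: \<tau>_def sum_const_smult of_nat_poly)
  show "gsub (\<lambda>c. [:c:]) \<tau> (\<Sum>j\<in>S0. pvar j) \<noteq> 0" unfolding e using c by simp
  have o: "order 0 [:0, 1::rat:] = 1" using order_power_n_n[of "0::rat" 1] by simp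
  show "order 0 (gsub (\<lambda>c. [:c:]) \<tau> (\<Sum>j\<in>S0. pvar j)) = 1"
    unfolding e order_smult[OF c] by (rule o)
qed

lemma l1_sep:
  assumes S0U: "S0 \<in> U"
  shows "\<exists>\<tau> r. (\<forall>S\<in>U. \<not> S \<subseteq> S0 \<longrightarrow> poly (gsub (\<lambda>c. [:c:]) \<tau> ((\<Prod>j\<in>S. pvar j) - 1)) r \<noteq> 0)
                 \<and> gsub (\<lambda>c. [:c:]) \<tau> ((\<Prod>j\<in>S0. pvar j) - 1) \<noteq> 0
                 \<and> order r (gsub (\<lambda>c. [:c:]) \<tau> ((\<Prod>j\<in>S0. pvar j) - 1)) = 1"
proof (intro exI conjI ballI impI)
  define \<tau> :: "nat \<Rightarrow> rat poly" where "\<tau> = (\<lambda>j. if j \<in> S0 then [:0,1:] else [:2:])"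
  have hS: "gsub (\<lambda>c. [:c:]) \<tau> ((\<Prod>j\<in>S. pvar j) - 1) = (\<Prod>j\<in>S. \<tau> j) - 1" for S
    by (simp add: gsub_diff[OF rhom_pconst] gsub_prod[OF rhom_pconst] gsub_pvar[OF rhom_pconst] gsub_one[OF rhom_pconst])
  {
    fix S assume SU: "S \<in> U" and ns: "\<not> S \<subseteq> S0"
    then obtain j where j: "j \<in> S" "j \<notin> S0" by blast
    have fS: "finite S" using SU by (simp add: U_def)
    have ge1: "(1::rat) \<le> (\<Prod>i\<in>S - {j}. poly (\<tau> i) 1)"
      by (rule prod_ge_1) (simp add: \<tau>_def)
    have "(\<Prod>i\<in>S. poly (\<tau> i) 1) = poly (\<tau> j) 1 * (\<Prod>i\<in>S - {j}. poly (\<tau> i) 1)"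
      using prod.remove[OF fS j(1)] by simp
    also have "\<dots> = 2 * (\<Prod>i\<in>S - {j}. poly (\<tau> i) 1)" using j by (simp add: \<tau>_def)
    finally have "(2::rat) \<le> (\<Prod>i\<in>S. poly (\<tau> i) 1)" using ge1 by simp
    then show "poly (gsub (\<lambda>c. [:c:]) \<tau> ((\<Prod>j\<in>S. pvar j) - 1)) 1 \<noteq> 0"
      unfolding hS by (simp add: poly_prod)
  }
  define k where "k = card S0"
  have k: "k \<noteq> 0" using S0U by (simp add: U_def k_def)
  define Q :: "rat poly" where "Q = (\<Sum>i<k. [:0,1:] ^ i)"
  have pr: "(\<Prod>j\<in>S0. \<tau> j) = [:0,1:] ^ k" by (simp add: \<tau>_def k_def)
  have X1: "[:0,1::rat:] - 1 = [:-1,1:]" by (simp add: one_pCons)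
  have pd: "[:0,1::rat:] ^ k - 1 = ([:0,1:] - 1) * Q"
    using power_diff_sumr2[of "[:0,1::rat:]" k 1] by (simp add: Q_def)
  have e: "gsub (\<lambda>c. [:c:]) \<tau> ((\<Prod>j\<in>S0. pvar j) - 1) = [:-1,1:] * Q"
    unfolding hS pr pd X1 ..
  have "poly Q 1 = of_nat k" by (simp add: Q_def poly_sum)
  then have pQ: "poly Q 1 \<noteq> 0" using k by simp
  then have Qnz: "Q \<noteq> 0" by auto
  have nz1: "[:-1,1::rat:] \<noteq> 0" by simp
  have nz: "[:-1,1::rat:] * Q \<noteq> 0" using Qnz nz1 mult_eq_0_iff by blast
  show "gsub (\<lambda>c. [:c:]) \<tau> ((\<Prod>j\<in>S0. pvar j) - 1) \<noteq> 0" unfolding e by (rule nz)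
  have o1: "order 1 [:-1, 1::rat:] = 1" using order_power_n_n[of "1::rat" 1] by simp
  have "order 1 ([:-1,1::rat:] * Q) = order 1 [:-1,1::rat:] + order 1 Q" by (rule order_mult[OF nz])
  then show "order 1 (gsub (\<lambda>c. [:c:]) \<tau> ((\<Prod>j\<in>S0. pvar j) - 1)) = 1"
    unfolding e using o1 order_0I[OF pQ] by simp
qed

lemma phi0_inj: "inj_on phi0 (FF n)"
proof (rule inj_onI)
  fix F G assume F: "F \<in> FF n" and G: "G \<in> FF n" and e: "phi0 F = phi0 G"
  show "F = G"
  proof (rule inj_generic[where L=l0 and Lp="\<lambda>S. \<Sum>j\<in>S. pvar j"])
    show "l0 S = Fract (\<Sum>j\<in>S. pvar j) 1" for S by (rule l0_Fract)
    show "(\<Sum>j\<in>S. pvar j) \<noteq> 0" if "S \<in> U" for S using l0_nz[OF that] unfolding l0_Fract Fract1_eq0 .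
  qed (use l0_sep FF_U[OF F] FF_U[OF G] e phi0_ev in auto)
qed

lemma phi1_inj: "inj_on phi1 (FF n)"
proof (rule inj_onI)
  fix F G assume F: "F \<in> FF n" and G: "G \<in> FF n" and e: "phi1 F = phi1 G"
  show "F = G"
  proof (rule inj_generic[where L=l1 and Lp="\<lambda>S. (\<Prod>j\<in>S. pvar j) - 1"])
    show "l1 S = Fract ((\<Prod>j\<in>S. pvar j) - 1) 1" for S by (rule l1_Fract)
    show "(\<Prod>j\<in>S. pvar j) - 1 \<noteq> 0" if "S \<in> U" for S using l1_nz[OF that] unfolding l1_Fract Fract1_eq0 .
  qed (use l1_sep FF_U[OF F] FF_U[OF G] e phi1_ev in auto)
qed

theorem mainTheorem1:
  shows "is_ns_set_operad FF ff_comp ff_unit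
    \<and> is_operad_morphism FF ff_comp ff_unit Mould mould0_comp (inverse (u 1)) phi0
    \<and> (\<forall>n\<ge>1. inj_on phi0 (FF n))
    \<and> is_operad_morphism FF ff_comp ff_unit Mould mould1_comp (inverse (u 1 - 1)) phi1
    \<and> (\<forall>n\<ge>1. inj_on phi1 (FF n))"
  using ff_operad phi0_Mould phi0_unit phi0_comp phi1_Mould phi1_unit phi1_comp phi0_inj phi1_inj
  unfolding is_operad_morphism_def by blast


end
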